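(* Let $\ket\psi$ be the output state of a $t$-doped Clifford circuit on $n$ qubits. Then the stabilizer dimension of $\ket\psi$ is at least $n-2t$.
   Context: A $t$-doped Clifford circuit starts in $\ket{0^n}$ and consists of Clifford gates (Hadamard, Phase, CNOT) and at most $t$ single-qubit non-Clifford gates. For $x=(a,b)\in\mathbb F_2^{2n}$, $W_x = i^{a\cdot b}X^{a_1}Z^{b_1}\otimes\cdots\otimes X^{a_n}Z^{b_n}$ ($a\cdot b$ over the integers). $\mathrm{Weyl}(\ket\psi)=\{x\in\mathbb F_2^{2n}:W_x\ket\psi=\pm\ket\psi\}$ is a subspace of $\mathbb F_2^{2n}$, and the stabilizer dimension of $\ket\psi$ is its dimension. *)

theory Defs
  imports "HOL-Analysis.Analysis" "HOL-Library.Z2"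
begin

text \<open>Qubits are indexed by a finite type 'n (so n = CARD('n)).
  An n-qubit state is a function from computational basis strings ('n \<Rightarrow> bool)
  to complex amplitudes.\<close>

type_synonym 'n state = "('n \<Rightarrow> bool) \<Rightarrow> complex"

text \<open>Gates: Hadamard, Phase, CNOT (control, target), and an arbitrary
  single-qubit gate given by its 2x2 matrix (row index = output bit).\<close>
datatype 'n gate = Hg 'n | Sg 'n | CNOTg 'n 'n | Ug 'n "bool \<Rightarrow> bool \<Rightarrow> complex"

definition unitary2 :: "(bool \<Rightarrow> bool \<Rightarrow> complex) \<Rightarrow> bool" where
  "unitary2 U \<longleftrightarrow> (\<forall>b b'. (\<Sum>c\<in>UNIV. cnj (U c b) * U c b') = (if b = b' then 1 else 0))"

fun valid_gate :: "'n gate \<Rightarrow> bool" where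
  "valid_gate (CNOTg c t) = (c \<noteq> t)"
| "valid_gate (Ug j U) = unitary2 U"
| "valid_gate _ = True"

fun is_nonclifford_slot :: "'n gate \<Rightarrow> bool" where
  "is_nonclifford_slot (Ug j U) = True"
| "is_nonclifford_slot _ = False"

fun apply_gate :: "'n gate \<Rightarrow> 'n state \<Rightarrow> 'n state" where
  "apply_gate (Hg j) \<psi> = (\<lambda>x. (\<psi> (x(j := False)) + (if x j then -1 else 1) * \<psi> (x(j := True)))
                                 / complex_of_real (sqrt 2))"
| "apply_gate (Sg j) \<psi> = (\<lambda>x. (if x j then \<i> else 1) * \<psi> x)"
| "apply_gate (CNOTg c t) \<psi> = (\<lambda>x. \<psi> (x(t := (x t \<noteq> x c))))"
| "apply_gate (Ug j U) \<psi> = (\<lambda>x. \<Sum>b\<in>UNIV. U (x j) b * \<psi> (x(j := b)))"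

definition zero_state :: "'n state" where
  "zero_state = (\<lambda>x. if x = (\<lambda>_. False) then 1 else 0)"

definition run_circuit :: "'n gate list \<Rightarrow> 'n state" where
  "run_circuit gs = foldl (\<lambda>\<psi> g. apply_gate g \<psi>) zero_state gs"

definition t_doped_clifford :: "nat \<Rightarrow> 'n gate list \<Rightarrow> bool" where
  "t_doped_clifford t gs \<longleftrightarrow> (\<forall>g\<in>set gs. valid_gate g) \<and> length (filter is_nonclifford_slot gs) \<le> t"

text \<open>F_2^{2n} = bit ^ ('n + 'n); for x, a_j = x $ Inl j and b_j = x $ Inr j.\<close>
definition weyl_op :: "bit ^ ('n::finite + 'n) \<Rightarrow> 'n state \<Rightarrow> 'n state" where
  "weyl_op v \<psi> = (\<lambda>z.
     let a = (\<lambda>j. v $ Inl j = 1); b = (\<lambda>j. v $ Inr j = 1);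
         y = (\<lambda>j. z j \<noteq> a j)
     in \<i> ^ card {j. a j \<and> b j} * (-1) ^ card {j. b j \<and> y j} * \<psi> y)"

definition Weyl :: "('n::finite) state \<Rightarrow> (bit ^ ('n + 'n)) set" where
  "Weyl \<psi> = {v. weyl_op v \<psi> = \<psi> \<or> weyl_op v \<psi> = (\<lambda>z. - \<psi> z)}"

definition stab_dim :: "('n::finite) state \<Rightarrow> nat" where
  "stab_dim \<psi> = vec.dim (Weyl \<psi>)"

end

theory Submission
  imports Defs
begin


lemma axis_indep: "vec.independent ((\<lambda>k. axis k (1::bit)) ` (A :: 'm::finite set))"
  by (rule vec.independent_mono[OF vec.independent_Basis]) (auto simp: cart_basis_def)

lemma axis_card: "card ((\<lambda>k. axis k (1::bit)) ` (A :: 'm::finite set)) = card A"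
  by (rule card_image) (auto simp: inj_on_def axis_eq_axis)

definition Kj :: "'n::finite \<Rightarrow> (bit^('n+'n)) set" where
  "Kj j = {v. v$Inl j = 0 \<and> v$Inr j = 0}"

lemma Kj_subspace: "vec.subspace (Kj j)"
  by (auto simp: vec.subspace_def Kj_def)

lemma Kj_dim: "vec.dim (Kj (j::'n::finite)) + 2 \<ge> CARD('n+'n)"
proof -
  let ?A = "UNIV - {Inl j, Inr j} :: ('n+'n) set"
  have "card ((\<lambda>k. axis k (1::bit)) ` ?A) \<le> vec.dim (Kj j)"
    by (rule vec.independent_card_le_dim[OF _ axis_indep]) (auto simp: Kj_def axis_def)
  moreover have "card ?A = CARD('n+'n) - 2" by (simp add: card_Diff_subset)
  ultimately show ?thesis using axis_card[of ?A] by linarith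
qed

lemma dim_Int_Kj:
  assumes "vec.subspace S"
  shows "vec.dim (S \<inter> Kj (j::'n::finite)) + 2 \<ge> vec.dim S"
proof -
  have e: "vec.dim {x + y |x y. x \<in> S \<and> y \<in> Kj j} + vec.dim (S \<inter> Kj j) = vec.dim S + vec.dim (Kj j)"
    by (rule vec.dim_sums_Int[OF assms Kj_subspace])
  have "vec.dim {x + y |x y. x \<in> S \<and> y \<in> Kj j} \<le> vec.dim (UNIV :: (bit^('n+'n)) set)"
    by (rule vec.dim_subset) simp
  then have "vec.dim {x + y |x y. x \<in> S \<and> y \<in> Kj j} \<le> CARD('n+'n)"
    by (simp only: vec_dim_card)
  with e Kj_dim[of j] show ?thesis by linarith
qed

definition S0 :: "(bit^('n::finite+'n)) set" where
  "S0 = {v. \<forall>j. v$Inl j = 0}"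

lemma S0_subspace: "vec.subspace S0"
  by (auto simp: vec.subspace_def S0_def)

lemma S0_dim: "vec.dim (S0 :: (bit^('n::finite+'n)) set) \<ge> CARD('n)"
proof -
  let ?A = "range Inr :: ('n+'n) set"
  have "card ((\<lambda>k. axis k (1::bit)) ` ?A) \<le> vec.dim (S0 :: (bit^('n::finite+'n)) set)"
    by (rule vec.independent_card_le_dim[OF _ axis_indep]) (auto simp: S0_def axis_def)
  moreover have "card ?A = CARD('n)" by (simp add: card_image)
  ultimately show ?thesis using axis_card[of ?A] by linarith
qed



definition ph :: "bool \<Rightarrow> bool \<Rightarrow> bool \<Rightarrow> complex" where
  "ph a b y = (if a \<and> b then \<i> else 1) * (if b \<and> y then -1 else 1)"

definition Phi :: "('n::finite \<Rightarrow> bool) \<Rightarrow> ('n \<Rightarrow> bool) \<Rightarrow> ('n \<Rightarrow> bool) \<Rightarrow> complex" where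
  "Phi a b y = (\<Prod>k\<in>UNIV. ph (a k) (b k) (y k))"

definition av :: "bit^('n::finite+'n) \<Rightarrow> 'n \<Rightarrow> bool" where "av v = (\<lambda>j. v$Inl j = 1)"
definition bv :: "bit^('n::finite+'n) \<Rightarrow> 'n \<Rightarrow> bool" where "bv v = (\<lambda>j. v$Inr j = 1)"

lemma pow_card_prod: "(c::complex) ^ card {j::'n::finite. P j} = (\<Prod>j\<in>UNIV. if P j then c else 1)"
  by (simp add: prod.If_cases Collect_conv_if)

lemma weyl_op_Phi: "weyl_op v \<psi> z = Phi (av v) (bv v) (\<lambda>j. z j \<noteq> av v j) * \<psi> (\<lambda>j. z j \<noteq> av v j)"
  unfolding weyl_op_def Let_def Phi_def ph_def av_def bv_def
  by (simp add: pow_card_prod prod.distrib)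

definition R1 :: "('n::finite \<Rightarrow> bool) \<Rightarrow> ('n \<Rightarrow> bool) \<Rightarrow> ('n \<Rightarrow> bool) \<Rightarrow> 'n \<Rightarrow> complex" where
  "R1 a b y j = (\<Prod>k\<in>UNIV-{j}. ph (a k) (b k) (y k))"

lemma Phi_split1: "Phi a b y = ph (a j) (b j) (y j) * R1 a b y j"
  unfolding Phi_def R1_def by (simp add: prod.remove)

lemma R1_upd: "R1 (a(j:=p)) b y j = R1 a b y j" "R1 a (b(j:=p)) y j = R1 a b y j" "R1 a b (y(j:=p)) j = R1 a b y j"
  unfolding R1_def by (auto intro!: prod.cong)

definition R2 :: "('n::finite \<Rightarrow> bool) \<Rightarrow> ('n \<Rightarrow> bool) \<Rightarrow> ('n \<Rightarrow> bool) \<Rightarrow> 'n \<Rightarrow> 'n \<Rightarrow> complex" where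
  "R2 a b y c t = (\<Prod>k\<in>UNIV-{c,t}. ph (a k) (b k) (y k))"

lemma Phi_split2: "c \<noteq> t \<Longrightarrow> Phi a b y = ph (a c) (b c) (y c) * ph (a t) (b t) (y t) * R2 a b y c t"
  unfolding Phi_def R2_def
  by (simp add: prod.remove[of UNIV c] prod.remove[of "UNIV-{c}" t] Diff_insert2[symmetric] insert_commute mult.assoc)

lemma R2_upd: "R2 (a(c:=p)) b y c t = R2 a b y c t" "R2 a (b(c:=p)) y c t = R2 a b y c t" "R2 a b (y(c:=p)) c t = R2 a b y c t"
  "R2 (a(t:=p)) b y c t = R2 a b y c t" "R2 a (b(t:=p)) y c t = R2 a b y c t" "R2 a b (y(t:=p)) c t = R2 a b y c t"
  unfolding R2_def by (auto intro!: prod.cong)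

lemma xor_upd: "(\<And>k. k \<noteq> j \<Longrightarrow> a' k = a k) \<Longrightarrow>
   (\<lambda>k. (z(j:=c)) k \<noteq> a k) = (\<lambda>k. z k \<noteq> a' k)(j := (c \<noteq> a j))"
  by (auto simp: fun_eq_iff)

lemma bit_add_iff: "((x::bit) + y = 1) \<longleftrightarrow> ((x = 1) \<noteq> (y = 1))"
  by (cases x; cases y) auto



definition LH :: "'n::finite \<Rightarrow> bit^('n+'n) \<Rightarrow> bit^('n+'n)" where
  "LH j v = (\<chi> k. if k = Inl j then v$Inr j else if k = Inr j then v$Inl j else v$k)"

lemma weyl_upd: "weyl_op v \<psi> (z(j:=c)) = ph (av v j) (bv v j) (c \<noteq> av v j) * R1 (av v) (bv v) (\<lambda>k. z k \<noteq> a' k) j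
     * \<psi> ((\<lambda>k. z k \<noteq> a' k)(j := (c \<noteq> av v j)))" if "\<And>k. k \<noteq> j \<Longrightarrow> a' k = av v k"
proof -
  have e: "(\<lambda>k. (z(j:=c)) k \<noteq> av v k) = (\<lambda>k. z k \<noteq> a' k)(j := (c \<noteq> av v j))"
    by (rule xor_upd) (use that in auto)
  show ?thesis
    unfolding weyl_op_Phi e Phi_split1[of _ _ _ j] R1_upd fun_upd_same by simp
qed


lemma H_core0: "ph B A (Z \<noteq> B) * R * (g False + (if Z \<noteq> B then -1 else 1) * g True) =
  (if A \<and> B then -1 else 1) * ((ph A B (False \<noteq> A) * R * g (False \<noteq> A) +
      (if Z then -1 else 1) * (ph A B (True \<noteq> A) * R * g (True \<noteq> A))))"
  by (cases A; cases B; cases Z) (simp_all add: ph_def algebra_simps)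

lemma H_core: "ph B A (Z \<noteq> B) * R * ((g False + (if Z \<noteq> B then -1 else 1) * g True) / s) =
  (if A \<and> B then -1 else 1) * ((ph A B (False \<noteq> A) * R * g (False \<noteq> A) +
      (if Z then -1 else 1) * (ph A B (True \<noteq> A) * R * g (True \<noteq> A))) / s)"
  by (metis (no_types, lifting) H_core0 times_divide_eq_right)

lemma H_conj: "weyl_op (LH j v) (apply_gate (Hg j) \<psi>) =
   (\<lambda>z. (if av v j \<and> bv v j then -1 else 1) * apply_gate (Hg j) (weyl_op v \<psi>) z)"
proof
  fix z
  define a where "a = av v"
  define b where "b = bv v"
  have avL: "av (LH j v) = a(j := b j)" unfolding a_def b_def av_def bv_def LH_def by (auto simp: fun_eq_iff)
  have bvL: "bv (LH j v) = b(j := a j)" unfolding a_def b_def av_def bv_def LH_def by (auto simp: fun_eq_iff)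
  define y where "y = (\<lambda>k. z k \<noteq> (a(j:=b j)) k)"
  have yj: "y j = (z j \<noteq> b j)" by (simp add: y_def)
  have L: "weyl_op (LH j v) (apply_gate (Hg j) \<psi>) z = ph (b j) (a j) (y j) * R1 a b y j *
     ((\<psi> (y(j:=False)) + (if y j then -1 else 1) * \<psi> (y(j:=True))) / complex_of_real (sqrt 2))"
  proof -
    have 1: "weyl_op (LH j v) (apply_gate (Hg j) \<psi>) z = Phi (a(j:=b j)) (b(j:=a j)) y * apply_gate (Hg j) \<psi> y"
      by (simp only: weyl_op_Phi avL bvL y_def)
    have 2: "Phi (a(j:=b j)) (b(j:=a j)) y = ph (b j) (a j) (y j) * R1 a b y j"
      by (simp only: Phi_split1[of _ _ _ j] R1_upd fun_upd_same)
    show ?thesis unfolding 1 2 by (simp only: apply_gate.simps)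
  qed
  have W: "weyl_op v \<psi> (z(j:=c)) = ph (a j) (b j) (c \<noteq> a j) * R1 a b y j * \<psi> (y(j := (c \<noteq> a j)))" for c
    unfolding y_def a_def b_def by (rule weyl_upd) simp
  have R: "(if av v j \<and> bv v j then -1 else 1) * apply_gate (Hg j) (weyl_op v \<psi>) z =
    (if a j \<and> b j then -1 else 1) * ((ph (a j) (b j) (False \<noteq> a j) * R1 a b y j * \<psi> (y(j := (False \<noteq> a j))) +
      (if z j then -1 else 1) * (ph (a j) (b j) (True \<noteq> a j) * R1 a b y j * \<psi> (y(j := (True \<noteq> a j))))) / complex_of_real (sqrt 2))"
    by (simp only: apply_gate.simps W a_def b_def)
  show "weyl_op (LH j v) (apply_gate (Hg j) \<psi>) z =
   (if av v j \<and> bv v j then -1 else 1) * apply_gate (Hg j) (weyl_op v \<psi>) z"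
    unfolding L R yj
    by (rule H_core[of "b j" "a j" "z j" "R1 a b y j" "\<lambda>c. \<psi> (y(j:=c))" "complex_of_real (sqrt 2)"])
qed



definition LS :: "'n::finite \<Rightarrow> bit^('n+'n) \<Rightarrow> bit^('n+'n)" where
  "LS j v = (\<chi> k. if k = Inr j then v$Inr j + v$Inl j else v$k)"

lemma S_core: "ph A (B \<noteq> A) Y * R * ((if Y then \<i> else 1) * p) =
   (if A \<and> B then -1 else 1) * ((if (Y \<noteq> A) then \<i> else 1) * (ph A B Y * R * p))"
  by (cases A; cases B; cases Y) (simp_all add: ph_def algebra_simps)

lemma S_conj: "weyl_op (LS j v) (apply_gate (Sg j) \<psi>) =
   (\<lambda>z. (if av v j \<and> bv v j then -1 else 1) * apply_gate (Sg j) (weyl_op v \<psi>) z)"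
proof
  fix z
  define a where "a = av v"
  define b where "b = bv v"
  have avL: "av (LS j v) = a" unfolding a_def av_def LS_def by (auto simp: fun_eq_iff)
  have bvL: "bv (LS j v) = b(j := (b j \<noteq> a j))" unfolding a_def b_def av_def bv_def LS_def
    by (auto simp: fun_eq_iff bit_add_iff)
  define y where "y = (\<lambda>k. z k \<noteq> a k)"
  have zj: "z j = (y j \<noteq> a j)" by (auto simp: y_def)
  have L: "weyl_op (LS j v) (apply_gate (Sg j) \<psi>) z = ph (a j) (b j \<noteq> a j) (y j) * R1 a b y j * ((if y j then \<i> else 1) * \<psi> y)"
  proof -
    have 1: "weyl_op (LS j v) (apply_gate (Sg j) \<psi>) z = Phi a (b(j := (b j \<noteq> a j))) y * apply_gate (Sg j) \<psi> y"
      by (simp only: weyl_op_Phi avL bvL y_def)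
    have 2: "Phi a (b(j := (b j \<noteq> a j))) y = ph (a j) (b j \<noteq> a j) (y j) * R1 a b y j"
      by (simp only: Phi_split1[of _ _ _ j] R1_upd fun_upd_same)
    show ?thesis unfolding 1 2 by (simp only: apply_gate.simps)
  qed
  have R: "(if av v j \<and> bv v j then -1 else 1) * apply_gate (Sg j) (weyl_op v \<psi>) z =
      (if a j \<and> b j then -1 else 1) * ((if z j then \<i> else 1) * (ph (a j) (b j) (y j) * R1 a b y j * \<psi> y))"
  proof -
    have "weyl_op v \<psi> z = Phi a b y * \<psi> y" by (simp only: weyl_op_Phi a_def b_def y_def)
    then show ?thesis by (simp only: apply_gate.simps Phi_split1[of _ _ _ j] a_def b_def)
  qed
  show "weyl_op (LS j v) (apply_gate (Sg j) \<psi>) z =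
   (if av v j \<and> bv v j then -1 else 1) * apply_gate (Sg j) (weyl_op v \<psi>) z"
    unfolding L R zj by (rule S_core)
qed

definition LC :: "'n::finite \<Rightarrow> 'n \<Rightarrow> bit^('n+'n) \<Rightarrow> bit^('n+'n)" where
  "LC c t v = (\<chi> k. if k = Inl t then v$Inl t + v$Inl c else if k = Inr c then v$Inr c + v$Inr t else v$k)"

lemma C_core: "ph Ac (Bc \<noteq> Bt) Yc * ph (At \<noteq> Ac) Bt Yt * R * p =
  (if Ac \<and> Bt \<and> (At = Bc) then -1 else 1) * (ph Ac Bc Yc * ph At Bt (Yt \<noteq> Yc) * R * p)"
  by (cases Ac; cases Bc; cases At; cases Bt; cases Yc; cases Yt) (simp_all add: ph_def)

lemma C_conj:
  assumes ct: "c \<noteq> t"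
  shows "weyl_op (LC c t v) (apply_gate (CNOTg c t) \<psi>) =
   (\<lambda>z. (if av v c \<and> bv v t \<and> (av v t = bv v c) then -1 else 1) * apply_gate (CNOTg c t) (weyl_op v \<psi>) z)"
proof
  fix z
  define a where "a = av v"
  define b where "b = bv v"
  have avL: "av (LC c t v) = a(t := (a t \<noteq> a c))" unfolding a_def av_def LC_def
    using ct by (auto simp: fun_eq_iff bit_add_iff)
  have bvL: "bv (LC c t v) = b(c := (b c \<noteq> b t))" unfolding a_def b_def av_def bv_def LC_def
    using ct by (auto simp: fun_eq_iff bit_add_iff)
  define y where "y = (\<lambda>k. z k \<noteq> (a(t := (a t \<noteq> a c))) k)"
  have w: "(\<lambda>k. (z(t := (z t \<noteq> z c))) k \<noteq> a k) = y(t := (y t \<noteq> y c))"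
    using ct by (auto simp: y_def fun_eq_iff)
  have L: "weyl_op (LC c t v) (apply_gate (CNOTg c t) \<psi>) z =
     ph (a c) (b c \<noteq> b t) (y c) * ph (a t \<noteq> a c) (b t) (y t) * R2 a b y c t * \<psi> (y(t := (y t \<noteq> y c)))"
  proof -
    have 1: "weyl_op (LC c t v) (apply_gate (CNOTg c t) \<psi>) z =
       Phi (a(t := (a t \<noteq> a c))) (b(c := (b c \<noteq> b t))) y * apply_gate (CNOTg c t) \<psi> y"
      by (simp only: weyl_op_Phi avL bvL y_def)
    have 2: "Phi (a(t := (a t \<noteq> a c))) (b(c := (b c \<noteq> b t))) y =
       ph (a c) (b c \<noteq> b t) (y c) * ph (a t \<noteq> a c) (b t) (y t) * R2 a b y c t"
      using ct by (simp add: Phi_split2[OF ct] R2_upd)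
    show ?thesis unfolding 1 2 by (simp only: apply_gate.simps)
  qed
  have R: "(if av v c \<and> bv v t \<and> (av v t = bv v c) then -1 else 1) * apply_gate (CNOTg c t) (weyl_op v \<psi>) z =
     (if a c \<and> b t \<and> (a t = b c) then -1 else 1) *
     (ph (a c) (b c) (y c) * ph (a t) (b t) (y t \<noteq> y c) * R2 a b y c t * \<psi> (y(t := (y t \<noteq> y c))))"
  proof -
    have "weyl_op v \<psi> (z(t := (z t \<noteq> z c))) = Phi a b (y(t := (y t \<noteq> y c))) * \<psi> (y(t := (y t \<noteq> y c)))"
      unfolding weyl_op_Phi a_def[symmetric] b_def[symmetric] w ..
    also have "Phi a b (y(t := (y t \<noteq> y c))) = ph (a c) (b c) (y c) * ph (a t) (b t) (y t \<noteq> y c) * R2 a b y c t"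
      using ct by (simp add: Phi_split2[OF ct] R2_upd)
    finally show ?thesis by (simp only: apply_gate.simps a_def b_def)
  qed
  show "weyl_op (LC c t v) (apply_gate (CNOTg c t) \<psi>) z =
   (if av v c \<and> bv v t \<and> (av v t = bv v c) then -1 else 1) * apply_gate (CNOTg c t) (weyl_op v \<psi>) z"
    unfolding L R by (rule C_core)
qed

lemma U_conj:
  assumes "v \<in> Kj j"
  shows "weyl_op v (apply_gate (Ug j U) \<psi>) = apply_gate (Ug j U) (weyl_op v \<psi>)"
proof
  fix z
  define a where "a = av v"
  define b where "b = bv v"
  have aj: "\<not> a j" "\<not> b j" using assms by (auto simp: Kj_def a_def b_def av_def bv_def)
  define y where "y = (\<lambda>k. z k \<noteq> a k)"
  have yj: "y j = z j" using aj by (simp add: y_def)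
  have L: "weyl_op v (apply_gate (Ug j U) \<psi>) z = R1 a b y j * (\<Sum>c\<in>UNIV. U (z j) c * \<psi> (y(j := c)))"
  proof -
    have "weyl_op v (apply_gate (Ug j U) \<psi>) z = Phi a b y * apply_gate (Ug j U) \<psi> y"
      by (simp only: weyl_op_Phi a_def b_def y_def)
    then show ?thesis using aj yj by (simp add: Phi_split1[of _ _ _ j] ph_def)
  qed
  have W: "weyl_op v \<psi> (z(j:=c)) = R1 a b y j * \<psi> (y(j := c))" for c
  proof -
    have "weyl_op v \<psi> (z(j:=c)) = ph (a j) (b j) (c \<noteq> a j) * R1 a b y j * \<psi> (y(j := (c \<noteq> a j)))"
      unfolding y_def a_def b_def by (rule weyl_upd) simp
    then show ?thesis using aj by (simp add: ph_def)
  qed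
  show "weyl_op v (apply_gate (Ug j U) \<psi>) z = apply_gate (Ug j U) (weyl_op v \<psi>) z"
    unfolding L unfolding apply_gate.simps W by (simp add: sum_distrib_left algebra_simps)
qed


lemma bit_cancel: "(x::bit) + y + y = x"
  by (cases x; cases y) simp_all

lemma lin_LH: "Vector_Spaces.linear (*s) (*s) (LH j :: bit^('n::finite+'n) \<Rightarrow> _)"
  unfolding Vector_Spaces.linear_iff
  by (auto simp: vec.vector_space_axioms vec_eq_iff LH_def simp del: add_bit_eq_xor mult_bit_eq_and)

lemma lin_LS: "Vector_Spaces.linear (*s) (*s) (LS j :: bit^('n::finite+'n) \<Rightarrow> _)"
  unfolding Vector_Spaces.linear_iff
  by (auto simp: vec.vector_space_axioms vec_eq_iff LS_def algebra_simps simp del: add_bit_eq_xor mult_bit_eq_and)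

lemma lin_LC: "Vector_Spaces.linear (*s) (*s) (LC c t :: bit^('n::finite+'n) \<Rightarrow> _)"
  unfolding Vector_Spaces.linear_iff
  by (auto simp: vec.vector_space_axioms vec_eq_iff LC_def algebra_simps simp del: add_bit_eq_xor mult_bit_eq_and)

lemma inj_LH: "inj (LH j :: bit^('n::finite+'n) \<Rightarrow> _)"
  by (rule inj_on_inverseI[where g = "LH j"]) (auto simp: vec_eq_iff LH_def)

lemma inj_LS: "inj (LS j :: bit^('n::finite+'n) \<Rightarrow> _)"
  by (rule inj_on_inverseI[where g = "LS j"]) (auto simp: vec_eq_iff LS_def bit_cancel simp del: add_bit_eq_xor)

lemma inj_LC: "c \<noteq> t \<Longrightarrow> inj (LC c t :: bit^('n::finite+'n) \<Rightarrow> _)"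
  by (rule inj_on_inverseI[where g = "LC c t"]) (auto simp: vec_eq_iff LC_def bit_cancel simp del: add_bit_eq_xor)

lemma gate_neg: "apply_gate g (\<lambda>z. - \<phi> z) = (\<lambda>z. - apply_gate g \<phi> z)"
  by (cases g) (auto simp: fun_eq_iff algebra_simps sum_negf diff_divide_distrib add_divide_distrib)

lemma clifford_step:
  fixes L :: "bit^('n::finite+'n) \<Rightarrow> bit^('n+'n)" and G :: "'n state \<Rightarrow> 'n state"
    and \<sigma> :: "bit^('n+'n) \<Rightarrow> complex"
  assumes lin: "Vector_Spaces.linear (*s) (*s) L" and inj: "inj L"
    and conj: "\<And>v \<phi>. weyl_op (L v) (G \<phi>) = (\<lambda>z. \<sigma> v * G (weyl_op v \<phi>) z)"
    and sg: "\<And>v. \<sigma> v = 1 \<or> \<sigma> v = -1"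
    and neg: "\<And>\<phi>. G (\<lambda>z. - \<phi> z) = (\<lambda>z. - G \<phi> z)"
    and sub: "vec.subspace S" and SW: "S \<subseteq> Weyl \<psi>"
  shows "\<exists>S'. vec.subspace S' \<and> S' \<subseteq> Weyl (G \<psi>) \<and> vec.dim S \<le> vec.dim S'"
proof (intro exI conjI)
  show "vec.subspace (L ` S)" by (rule vec.linear_subspace_image[OF lin sub])
  show "L ` S \<subseteq> Weyl (G \<psi>)"
  proof
    fix w assume "w \<in> L ` S"
    then obtain v where v: "v \<in> S" "w = L v" by auto
    have "weyl_op v \<psi> = \<psi> \<or> weyl_op v \<psi> = (\<lambda>z. - \<psi> z)" using SW v by (auto simp: Weyl_def)
    moreover have c: "weyl_op (L v) (G \<psi>) = (\<lambda>z. \<sigma> v * G (weyl_op v \<psi>) z)" by (rule conj)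
    ultimately show "w \<in> Weyl (G \<psi>)" using sg[of v] unfolding Weyl_def v(2) c
      by (elim disjE) (simp_all add: neg c)
  qed
  show "vec.dim S \<le> vec.dim (L ` S)"
    using vec.dim_image_eq[OF lin inj_on_subset[OF inj subset_UNIV]] by simp
qed

lemma U_step:
  assumes sub: "vec.subspace S" and SW: "S \<subseteq> Weyl \<psi>"
  shows "\<exists>S'. vec.subspace S' \<and> S' \<subseteq> Weyl (apply_gate (Ug j U) \<psi>) \<and> vec.dim S \<le> vec.dim S' + 2"
proof (intro exI conjI)
  show "vec.subspace (S \<inter> Kj j)" by (rule vec.subspace_inter[OF sub Kj_subspace])
  show "S \<inter> Kj j \<subseteq> Weyl (apply_gate (Ug j U) \<psi>)"
  proof
    fix v assume v: "v \<in> S \<inter> Kj j"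
    have "weyl_op v \<psi> = \<psi> \<or> weyl_op v \<psi> = (\<lambda>z. - \<psi> z)" using SW v by (auto simp: Weyl_def)
    then show "v \<in> Weyl (apply_gate (Ug j U) \<psi>)"
      unfolding Weyl_def using U_conj[of v j U \<psi>] v by (elim disjE) (simp_all add: gate_neg del: apply_gate.simps)
  qed
  show "vec.dim S \<le> vec.dim (S \<inter> Kj j) + 2" by (rule dim_Int_Kj[OF sub])
qed

lemma gate_step:
  assumes "valid_gate g" and sub: "vec.subspace S" and SW: "S \<subseteq> Weyl \<psi>"
  shows "\<exists>S'. vec.subspace S' \<and> S' \<subseteq> Weyl (apply_gate g \<psi>) \<and>
     vec.dim S \<le> vec.dim S' + (if is_nonclifford_slot g then 2 else 0)"
proof (cases g)
  case (Hg j)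
  have "\<exists>S'. vec.subspace S' \<and> S' \<subseteq> Weyl (apply_gate (Hg j) \<psi>) \<and> vec.dim S \<le> vec.dim S'"
    by (rule clifford_step[OF lin_LH inj_LH H_conj _ gate_neg sub SW]) simp
  then show ?thesis using Hg by simp
next
  case (Sg j)
  have "\<exists>S'. vec.subspace S' \<and> S' \<subseteq> Weyl (apply_gate (Sg j) \<psi>) \<and> vec.dim S \<le> vec.dim S'"
    by (rule clifford_step[OF lin_LS inj_LS S_conj _ gate_neg sub SW]) simp
  then show ?thesis using Sg by simp
next
  case (CNOTg c t)
  then have ct: "c \<noteq> t" using assms(1) by simp
  have "\<exists>S'. vec.subspace S' \<and> S' \<subseteq> Weyl (apply_gate (CNOTg c t) \<psi>) \<and> vec.dim S \<le> vec.dim S'"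
    by (rule clifford_step[OF lin_LC inj_LC[OF ct] C_conj[OF ct] _ gate_neg sub SW]) simp
  then show ?thesis using CNOTg by simp
next
  case (Ug j U)
  then show ?thesis using U_step[OF sub SW, of j U] by simp
qed

lemma run_main:
  "\<forall>g\<in>set gs. valid_gate g \<Longrightarrow> vec.subspace S \<Longrightarrow> S \<subseteq> Weyl \<psi> \<Longrightarrow>
   \<exists>S'. vec.subspace S' \<and> S' \<subseteq> Weyl (foldl (\<lambda>\<psi> g. apply_gate g \<psi>) \<psi> gs) \<and>
     vec.dim S \<le> vec.dim S' + 2 * length (filter is_nonclifford_slot gs)"
proof (induction gs arbitrary: \<psi> S)
  case Nil
  then show ?case by auto
next
  case (Cons g gs)
  obtain S1 where S1: "vec.subspace S1" "S1 \<subseteq> Weyl (apply_gate g \<psi>)"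
    "vec.dim S \<le> vec.dim S1 + (if is_nonclifford_slot g then 2 else 0)"
    using gate_step[of g S \<psi>] Cons.prems by auto
  obtain S' where S': "vec.subspace S'" "S' \<subseteq> Weyl (foldl (\<lambda>\<psi> g. apply_gate g \<psi>) (apply_gate g \<psi>) gs)"
    "vec.dim S1 \<le> vec.dim S' + 2 * length (filter is_nonclifford_slot gs)"
    using Cons.IH[OF _ S1(1) S1(2)] Cons.prems(1) by auto
  show ?case
    using S' S1(3) by (intro exI[of _ S']) (auto split: if_splits)
qed

lemma S0_Weyl: "S0 \<subseteq> Weyl (zero_state :: ('n::finite) state)"
proof
  fix v :: "bit^('n+'n)" assume v: "v \<in> S0"
  have a: "av v = (\<lambda>_. False)" using v by (auto simp: S0_def av_def fun_eq_iff)
  have "weyl_op v zero_state = zero_state"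
  proof
    fix z :: "'n \<Rightarrow> bool"
    have "weyl_op v zero_state z = Phi (\<lambda>_. False) (bv v) z * zero_state z"
      by (simp add: weyl_op_Phi a)
    also have "\<dots> = zero_state z"
      by (auto simp: zero_state_def Phi_def ph_def)
    finally show "weyl_op v zero_state z = zero_state z" .
  qed
  then show "v \<in> Weyl zero_state" by (simp add: Weyl_def)
qed

theorem lemma4p2:
  fixes gs :: "('n::finite) gate list" and t :: nat
  assumes "t_doped_clifford t gs"
  shows "stab_dim (run_circuit gs) \<ge> CARD('n) - 2 * t"
proof -
  have v: "\<forall>g\<in>set gs. valid_gate g" and k: "length (filter is_nonclifford_slot gs) \<le> t"
    using assms by (auto simp: t_doped_clifford_def)
  obtain S' where S': "vec.subspace S'" "S' \<subseteq> Weyl (run_circuit gs)"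
    "vec.dim (S0 :: (bit^('n+'n)) set) \<le> vec.dim S' + 2 * length (filter is_nonclifford_slot gs)"
    using run_main[OF v S0_subspace S0_Weyl] unfolding run_circuit_def by auto
  have "vec.dim S' \<le> stab_dim (run_circuit gs)"
    unfolding stab_dim_def by (rule vec.dim_subset[OF S'(2)])
  moreover have "CARD('n) \<le> vec.dim (S0 :: (bit^('n+'n)) set)" by (rule S0_dim)
  ultimately show ?thesis using S'(3) k by linarith
qed

end
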